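(* Fix $m \ge 1$ and consider the finite partial monitoring game for SumLoss with top-1 feedback and binary relevance, with loss matrix $L$ and feedback matrix $H$ as defined in the context. Then the global observability condition holds: for every pair of learner actions $\sigma_i,\sigma_j$, $$\ell_i-\ell_j \in \bigoplus_{k\in[m!]} \mathrm{Col}(S_k^{\top}).$$
   Context: Objects are $\{1,\dots,m\}$; $[n]=\{1,\dots,n\}$. A learner action is a permutation $\sigma$ of $[m]$, where $\sigma(i)$ is the rank (position) of object $i$ and $\sigma^{-1}(j)$ is the object at position $j$; fix an enumeration $\sigma_1,\dots,\sigma_{m!}$ of all permutations. An adversary action is a relevance vector $r\in\{0,1\}^m$; fix an enumeration $r_1,\dots,r_{2^m}$. SumLoss is $SumLoss(\sigma,r)=\sum_{i=1}^m \sigma(i)r(i)$. The loss matrix $L$ is the $m!\times 2^m$ matrix with $L_{i,j}=SumLoss(\sigma_i,r_j)$, and $\ell_i\in\mathbb{R}^{2^m}$ denotes its $i$-th row. The feedback matrix $H$ is the $m!\times 2^m$ matrix with $H_{i,j}=r_j(\sigma_i^{-1}(1))$ (the relevance of the top-ranked object). The signal matrix of action $\sigma_i$ is $S_i\in\{0,1\}^{2\times 2^m}$ with $(S_i)_{1,\ell}=\mathbb{1}(H_{i,\ell}=0)$ and $(S_i)_{2,\ell}=\mathbb{1}(H_{i,\ell}=1)$. $\mathrm{Col}(\cdot)$ denotes column space and $\bigoplus$ the sum of subspaces of $\mathbb{R}^{2^m}$. *)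

theory Defs
  imports Complex_Main "HOL-Library.FuncSet" "HOL-Combinatorics.Permutations"
begin

text \<open>Learner actions: permutations of [m]; sigma i is the rank of object i.\<close>
definition perms :: "nat \<Rightarrow> (nat \<Rightarrow> nat) set" where
  "perms m = {\<sigma>. \<sigma> permutes {1..m}}"

definition rels :: "nat \<Rightarrow> (nat \<Rightarrow> nat) set" where
  "rels m = ({1..m} \<rightarrow>\<^sub>E {0, 1})"

text \<open>SumLoss(sigma, r) = sum_i sigma(i) r(i); this is the entry L at (sigma, r).\<close>
definition sumloss :: "nat \<Rightarrow> (nat \<Rightarrow> nat) \<Rightarrow> (nat \<Rightarrow> nat) \<Rightarrow> real" where
  "sumloss m \<sigma> r = (\<Sum>i = 1..m. real (\<sigma> i * r i))"

text \<open>Feedback H(sigma, r) = relevance of the top-ranked object sigma^{-1}(1).\<close>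
definition feedback :: "(nat \<Rightarrow> nat) \<Rightarrow> (nat \<Rightarrow> nat) \<Rightarrow> nat" where
  "feedback \<sigma> r = r (inv \<sigma> 1)"

text \<open>Signal matrix of sigma: row h (h = 0 is the first row, h = 1 the second),
  column r, entry 1(H(sigma,r) = h).\<close>
definition signal :: "(nat \<Rightarrow> nat) \<Rightarrow> nat \<Rightarrow> (nat \<Rightarrow> nat) \<Rightarrow> real" where
  "signal \<sigma> h r = (if feedback \<sigma> r = h then 1 else 0)"

end

theory Submission
  imports Defs
begin

theorem theorem1:
  fixes m :: nat and \<sigma>i \<sigma>j :: "nat \<Rightarrow> nat"
  assumes "m \<ge> 1" and "\<sigma>i \<in> perms m" and "\<sigma>j \<in> perms m"
  shows "\<exists>c :: (nat \<Rightarrow> nat) \<Rightarrow> nat \<Rightarrow> real.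
           \<forall>r \<in> rels m. sumloss m \<sigma>i r - sumloss m \<sigma>j r
              = (\<Sum>k \<in> perms m. \<Sum>h \<in> {0, 1}. c k h * signal k h r)"
proof -
  define \<tau> :: "nat \<Rightarrow> nat \<Rightarrow> nat" where "\<tau> i = Transposition.transpose 1 i" for i
  define a :: "nat \<Rightarrow> real" where "a i = real (\<sigma>i i) - real (\<sigma>j i)" for i
  define c :: "(nat \<Rightarrow> nat) \<Rightarrow> nat \<Rightarrow> real" where
    "c k h = (if h = 1 then (\<Sum>i\<in>{1..m}. if \<tau> i = k then a i else 0) else 0)" for k h
  have fin: "finite (perms m)"
    unfolding perms_def using finite_permutations[of "{1..m}"] by simp
  have tin: "\<tau> i \<in> perms m" if "i \<in> {1..m}" for i
    unfolding perms_def \<tau>_def using that assms(1) by (auto intro!: permutes_swap_id)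
  have sig: "signal (\<tau> i) 1 r = real (r i)" if "r \<in> rels m" "i \<in> {1..m}" for r i
  proof -
    have "r i \<in> {0,1}" using that unfolding rels_def by auto
    moreover have "inv (\<tau> i) 1 = i" unfolding \<tau>_def by simp
    ultimately show ?thesis unfolding signal_def feedback_def by auto
  qed
  show ?thesis
  proof (intro exI ballI)
    fix r assume r: "r \<in> rels m"
    have "(\<Sum>k \<in> perms m. \<Sum>h \<in> {0, 1}. c k h * signal k h r)
        = (\<Sum>k \<in> perms m. c k 1 * signal k 1 r)"
      by (simp add: c_def)
    also have "\<dots> = (\<Sum>k \<in> perms m. \<Sum>i\<in>{1..m}. if \<tau> i = k then a i * signal k 1 r else 0)"
      unfolding c_def by (auto simp: sum_distrib_right intro!: sum.cong)
    also have "\<dots> = (\<Sum>i\<in>{1..m}. \<Sum>k \<in> perms m. if \<tau> i = k then a i * signal k 1 r else 0)"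
      by (rule sum.swap)
    also have "\<dots> = (\<Sum>i\<in>{1..m}. a i * signal (\<tau> i) 1 r)"
      using fin tin by (simp add: sum.delta')
    also have "\<dots> = (\<Sum>i\<in>{1..m}. a i * real (r i))"
      using sig r by simp
    also have "\<dots> = sumloss m \<sigma>i r - sumloss m \<sigma>j r"
      unfolding sumloss_def a_def by (simp add: sum_subtractf left_diff_distrib)
    finally show "sumloss m \<sigma>i r - sumloss m \<sigma>j r
              = (\<Sum>k \<in> perms m. \<Sum>h \<in> {0, 1}. c k h * signal k h r)" by simp
  qed
qed

end
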